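(* Let $\mathcal{G}=(\mathcal{V},\mathcal{E})$ be an unweighted connected finite simple graph and let $u\in\mathcal{V}$ be dominated by some vertex $v\in\mathcal{V}$, $v\neq u$. Then for every $k\geq 1$, $$\widehat{PD}_k(\mathcal{G})=\widehat{PD}_k(\mathcal{G}-\{u\}).$$
   Context: $N(w)$ is the closed neighborhood of $w$ (the vertex together with its neighbors); $u$ is dominated by $v\ne u$ if $N(u)\subset N(v)$. $\mathcal{G}-\{u\}$ deletes $u$ and its incident edges. For $n\ge 1$, the $n$-th power $\mathcal{G}^{(n)}$ is the graph on $\mathcal{V}$ in which distinct vertices $x,y$ are adjacent iff their shortest-path distance $d(x,y)$ in $\mathcal{G}$ (each edge of length 1) is at most $n$. The power filtration is $K_0\subset K_1\subset K_2\subset\cdots\subset K_N$, where $K_0$ is the vertex set $\mathcal{V}$ (as a 0-dimensional complex), $K_n$ for $n\ge 1$ is the clique (flag) complex of $\mathcal{G}^{(n)}$, and $N$ is the diameter of $\mathcal{G}$. $\widehat{PD}_k(\mathcal{G})$ is the $k$-th persistence diagram (field coefficients) of this filtration. *)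

theory Defs
  imports Main "HOL-Library.Function_Algebras" "HOL-Library.Extended_Nat"
begin

definition simple_graph :: "'v set \<Rightarrow> ('v \<Rightarrow> 'v \<Rightarrow> bool) \<Rightarrow> bool" where
  "simple_graph V E \<longleftrightarrow> finite V \<and> (\<forall>x y. E x y \<longrightarrow> x \<in> V \<and> y \<in> V)
     \<and> (\<forall>x y. E x y \<longrightarrow> E y x) \<and> (\<forall>x. \<not> E x x)"

definition is_walk :: "'v set \<Rightarrow> ('v \<Rightarrow> 'v \<Rightarrow> bool) \<Rightarrow> 'v list \<Rightarrow> 'v \<Rightarrow> 'v \<Rightarrow> bool" where
  "is_walk V E xs x y \<longleftrightarrow> xs \<noteq> [] \<and> hd xs = x \<and> last xs = y \<and> set xs \<subseteq> V
     \<and> (\<forall>i. Suc i < length xs \<longrightarrow> E (xs ! i) (xs ! Suc i))"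

text \<open>Shortest-path distance (each edge has length 1); \<infinity> if no path exists.\<close>
definition gdist :: "'v set \<Rightarrow> ('v \<Rightarrow> 'v \<Rightarrow> bool) \<Rightarrow> 'v \<Rightarrow> 'v \<Rightarrow> enat" where
  "gdist V E x y = Inf {enat (length xs - 1) | xs. is_walk V E xs x y}"

definition connected_graph :: "'v set \<Rightarrow> ('v \<Rightarrow> 'v \<Rightarrow> bool) \<Rightarrow> bool" where
  "connected_graph V E \<longleftrightarrow> V \<noteq> {} \<and> (\<forall>x\<in>V. \<forall>y\<in>V. \<exists>xs. is_walk V E xs x y)"

definition closed_nbhd :: "('v \<Rightarrow> 'v \<Rightarrow> bool) \<Rightarrow> 'v \<Rightarrow> 'v set" where
  "closed_nbhd E w = insert w {y. E w y}"

definition dominated_by :: "'v set \<Rightarrow> ('v \<Rightarrow> 'v \<Rightarrow> bool) \<Rightarrow> 'v \<Rightarrow> 'v \<Rightarrow> bool" where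
  "dominated_by V E u v \<longleftrightarrow> u \<in> V \<and> v \<in> V \<and> v \<noteq> u \<and> closed_nbhd E u \<subseteq> closed_nbhd E v"

definition del_vertices :: "'v set \<Rightarrow> 'v \<Rightarrow> 'v set" where
  "del_vertices V u = V - {u}"

definition del_edges :: "('v \<Rightarrow> 'v \<Rightarrow> bool) \<Rightarrow> 'v \<Rightarrow> 'v \<Rightarrow> 'v \<Rightarrow> bool" where
  "del_edges E u = (\<lambda>x y. E x y \<and> x \<noteq> u \<and> y \<noteq> u)"

text \<open>K_n = clique complex of the n-th power graph (for n = 0: just the vertices). K_\<infinity> is the final complex
  (= K_N, N the diameter, for connected graphs).\<close>
definition power_complex :: "'v set \<Rightarrow> ('v \<Rightarrow> 'v \<Rightarrow> bool) \<Rightarrow> enat \<Rightarrow> 'v set set" where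
  "power_complex V E n = {\<sigma>. \<sigma> \<noteq> {} \<and> finite \<sigma> \<and> \<sigma> \<subseteq> V \<and>
      (\<forall>x\<in>\<sigma>. \<forall>y\<in>\<sigma>. x \<noteq> y \<longrightarrow> gdist V E x y \<le> n)}"

text \<open>k-chains of a complex K: functions on k-simplices (card = k+1), oriented by the
  order of the vertex type.\<close>
definition chains :: "'v set set \<Rightarrow> nat \<Rightarrow> ('v set \<Rightarrow> 'f::field) set" where
  "chains K k = {c. \<forall>\<sigma>. c \<sigma> \<noteq> 0 \<longrightarrow> \<sigma> \<in> K \<and> card \<sigma> = Suc k}"

text \<open>Boundary operator d_k : C_k \<rightarrow> C_{k-1}, d_0 = 0;
  d[v_0<...<v_k] = sum_i (-1)^i [v_0..^v_i..v_k].\<close>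
definition bdry :: "'v::linorder set \<Rightarrow> nat \<Rightarrow> ('v set \<Rightarrow> 'f::field) \<Rightarrow> 'v set \<Rightarrow> 'f" where
  "bdry V k c \<tau> = (if k \<ge> 1 \<and> card \<tau> = k then
      (\<Sum>w\<in>V - \<tau>. (-1) ^ card {x\<in>\<tau>. x < w} * c (insert w \<tau>)) else 0)"

definition cycles :: "'v::linorder set \<Rightarrow> 'v set set \<Rightarrow> nat \<Rightarrow> ('v set \<Rightarrow> 'f::field) set" where
  "cycles V K k = {c \<in> chains K k. bdry V k c = 0}"

definition boundaries :: "'v::linorder set \<Rightarrow> 'v set set \<Rightarrow> nat \<Rightarrow> ('v set \<Rightarrow> 'f::field) set" where
  "boundaries V K k = bdry V (Suc k) ` chains K (Suc k)"

definition dimF :: "('v set \<Rightarrow> 'f::field) set \<Rightarrow> nat" where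
  "dimF S = vector_space.dim (\<lambda>a (f :: 'v set \<Rightarrow> 'f). (\<lambda>x. a * f x)) S"

text \<open>Persistent Betti number beta_k^{i,j} = rank(H_k(K_i) \<rightarrow> H_k(K_j)), i \<le> j:
  the image is (Z_k(K_i) + B_k(K_j)) / B_k(K_j).\<close>
definition pers_betti :: "'f::field itself \<Rightarrow> 'v::linorder set \<Rightarrow> ('v \<Rightarrow> 'v \<Rightarrow> bool)
    \<Rightarrow> nat \<Rightarrow> enat \<Rightarrow> enat \<Rightarrow> nat" where
  "pers_betti F V E k i j =
     dimF {z + b | z b. z \<in> (cycles V (power_complex V E i) k :: ('v set \<Rightarrow> 'f) set) \<and>
                        b \<in> boundaries V (power_complex V E j) k}
     - dimF (boundaries V (power_complex V E j) k :: ('v set \<Rightarrow> 'f) set)"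

text \<open>beta with the convention beta^{-1,j} = 0 (birth index shifted by one).\<close>
definition betti_prev :: "'f::field itself \<Rightarrow> 'v::linorder set \<Rightarrow> ('v \<Rightarrow> 'v \<Rightarrow> bool)
    \<Rightarrow> nat \<Rightarrow> nat \<Rightarrow> enat \<Rightarrow> int" where
  "betti_prev F V E k b j = (if b = 0 then 0 else int (pers_betti F V E k (enat (b - 1)) j))"

text \<open>k-th persistence diagram of the power filtration, as the multiplicity function of
  points (birth b, death d), d = \<infinity> for essential classes, given by the standard
  inclusion-exclusion formula of persistent Betti numbers.\<close>
definition PD :: "'f::field itself \<Rightarrow> 'v::linorder set \<Rightarrow> ('v \<Rightarrow> 'v \<Rightarrow> bool)
    \<Rightarrow> nat \<Rightarrow> nat \<Rightarrow> enat \<Rightarrow> int" where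
  "PD F V E k b d =
    (if d = \<infinity> then int (pers_betti F V E k (enat b) \<infinity>) - betti_prev F V E k b \<infinity>
     else if enat b < d then
       (let j = the_enat d in
          int (pers_betti F V E k (enat b) (enat (j - 1))) - betti_prev F V E k b (enat (j - 1))
        - int (pers_betti F V E k (enat b) (enat j)) + betti_prev F V E k b (enat j))
     else 0)"

end

theory Submission
  imports Defs
begin


interpretation fs: vector_space "\<lambda>a (f::'a \<Rightarrow> 'b::field) x. a * f x"
  by unfold_locales (auto simp: fun_eq_iff algebra_simps)

context vector_space begin

lemma dim_direct_sum:
  assumes S: "subspace S" and T: "subspace T" and ST: "S \<inter> T \<subseteq> {0}"
    and W: "S \<subseteq> span W" "T \<subseteq> span W" "finite W"
  shows "dim {x + y |x y. x \<in> S \<and> y \<in> T} = dim S + dim T"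
proof -
  obtain BS where BS: "BS \<subseteq> S" "independent BS" "S \<subseteq> span BS" "card BS = dim S"
    using basis_exists by metis
  obtain BT where BT: "BT \<subseteq> T" "independent BT" "T \<subseteq> span BT" "card BT = dim T"
    using basis_exists by metis
  have "BS \<subseteq> span W" using BS(1) W(1) by blast
  from independent_span_bound[OF W(3) BS(2) this] have finS: "finite BS" by blast
  have "BT \<subseteq> span W" using BT(1) W(2) by blast
  from independent_span_bound[OF W(3) BT(2) this] have finT: "finite BT" by blast
  have spS: "span BS = S" using span_minimal[OF BS(1) S] BS(3) by blast
  have spT: "span BT = T" using span_minimal[OF BT(1) T] BT(3) by blast
  have zS: "0 \<notin> BS" using BS(2) dependent_zero by blast
  have disj: "BS \<inter> BT = {}" using BS(1) BT(1) ST zS by blast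
  have sp: "span (BS \<union> BT) = {x + y |x y. x \<in> S \<and> y \<in> T}"
    unfolding span_Un spS spT ..
  have ind: "independent (BS \<union> BT)"
  proof
    assume "dependent (BS \<union> BT)"
    then obtain a where a: "a \<in> BS \<union> BT" "a \<in> span (BS \<union> BT - {a})"
      unfolding dependent_def by blast
    show False
    proof (cases "a \<in> BS")
      case True
      have "BS \<union> BT - {a} = (BS - {a}) \<union> BT" using True disj by auto
      with a have "a \<in> {x + y | x y. x \<in> span (BS - {a}) \<and> y \<in> span BT}"
        unfolding span_Un[symmetric] by simp
      then obtain x y where xy: "a = x + y" "x \<in> span (BS - {a})" "y \<in> span BT"
        by blast
      have "span (BS - {a}) \<subseteq> span BS" by (rule span_mono) blast
      then have "x \<in> S" using xy(2) spS by blast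
      moreover have "a \<in> S" using True BS(1) by auto
      ultimately have "y \<in> S" using xy(1) subspace_diff[OF S \<open>a \<in> S\<close> \<open>x \<in> S\<close>]
        by (simp add: algebra_simps)
      moreover have "y \<in> T" using xy(3) spT by auto
      ultimately have "y = 0" using ST by auto
      then have "a \<in> span (BS - {a})" using xy by simp
      moreover have "\<not> (\<exists>a \<in> BS. a \<in> span (BS - {a}))" using BS(2) unfolding dependent_def .
      ultimately show False using True by blast
    next
      case False
      then have aT: "a \<in> BT" using a by auto
      have "BS \<union> BT - {a} = BS \<union> (BT - {a})" using aT disj by auto
      with a have "a \<in> {x + y | x y. x \<in> span BS \<and> y \<in> span (BT - {a})}"
        unfolding span_Un[symmetric] by simp
      then obtain x y where xy: "a = x + y" "x \<in> span BS" "y \<in> span (BT - {a})"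
        by blast
      have "span (BT - {a}) \<subseteq> span BT" by (rule span_mono) blast
      then have "y \<in> T" using xy(3) spT by blast
      moreover have "a \<in> T" using aT BT(1) by auto
      ultimately have "x \<in> T" using xy(1) subspace_diff[OF T \<open>a \<in> T\<close> \<open>y \<in> T\<close>]
        by (simp add: algebra_simps)
      moreover have "x \<in> S" using xy(2) spS by auto
      ultimately have "x = 0" using ST by auto
      then have "a \<in> span (BT - {a})" using xy by simp
      moreover have "\<not> (\<exists>a \<in> BT. a \<in> span (BT - {a}))" using BT(2) unfolding dependent_def .
      ultimately show False using aT by blast
    qed
  qed
  have "dim {x + y |x y. x \<in> S \<and> y \<in> T} = card (BS \<union> BT)"
  proof -
    have sp2: "span {x + y |x y. x \<in> S \<and> y \<in> T} = {x + y |x y. x \<in> S \<and> y \<in> T}"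
      by (rule span_eq_iff[THEN iffD2, OF subspace_sums[OF S T]])
    have "span (BS \<union> BT) = span {x + y |x y. x \<in> S \<and> y \<in> T}" by (subst sp2) (rule sp)
    from dim_eq_card[OF this ind] show ?thesis .
  qed
  also have "\<dots> = dim S + dim T" using card_Un_disjoint[OF finS finT disj] BS BT by simp
  finally show ?thesis .
qed

lemma dim_retract:
  assumes A: "subspace A" and B: "subspace B" and A': "subspace A'" and B': "subspace B'"
    and W: "A \<subseteq> span W" "finite W"
    and BA: "B \<subseteq> A" and AA: "A' \<subseteq> A" and BB: "B' \<subseteq> B" and BA': "B' \<subseteq> A'"
    and fadd: "\<And>x y. f (x + y) = f x + f y" and fsc: "\<And>c x. f (c *s x) = c *s f x"
    and fA: "\<And>x. x \<in> A \<Longrightarrow> f x \<in> A'" and fB: "\<And>x. x \<in> B \<Longrightarrow> f x \<in> B'"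
    and fid: "\<And>x. x \<in> A' \<Longrightarrow> f x = x"
    and ker: "\<And>x. x \<in> A \<Longrightarrow> f x = 0 \<Longrightarrow> x \<in> B"
  shows "dim A - dim B = dim A' - dim B'"
proof -
  define N where "N = {x \<in> A. f x = 0}"
  have f0: "f 0 = 0" using fadd[of 0 0] by simp
  have fminus: "f (x - y) = f x - f y" for x y
    using fadd[of "x - y" y] by (simp add: algebra_simps)
  have N: "subspace N" unfolding subspace_def
  proof (intro conjI ballI allI)
    show "0 \<in> N" unfolding N_def using f0 subspace_0[OF A] by blast
  next
    fix x y assume "x \<in> N" "y \<in> N"
    then show "x + y \<in> N" unfolding N_def using fadd[of x y] subspace_add[OF A] by auto
  next
    fix c x assume "x \<in> N"
    then show "c *s x \<in> N" unfolding N_def using fsc[of c x] subspace_scale[OF A] by auto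
  qed
  have NB: "N \<subseteq> B" using ker N_def by auto
  have decA: "A = {x + y |x y. x \<in> A' \<and> y \<in> N}"
  proof (intro equalityI subsetI)
    fix a assume a: "a \<in> A"
    have "f a \<in> A'" using fA a .
    moreover have "a - f a \<in> N"
    proof -
      have "f a \<in> A" using subsetD[OF AA \<open>f a \<in> A'\<close>] .
      then have "a - f a \<in> A" using subspace_diff[OF A a] by blast
      moreover have "f (a - f a) = 0"
      proof -
        have "f (f a) = f a" by (rule fid[OF \<open>f a \<in> A'\<close>])
        then show ?thesis by (simp only: fminus diff_self)
      qed
      ultimately show ?thesis unfolding N_def by blast
    qed
    moreover have "a = f a + (a - f a)" by simp
    ultimately show "a \<in> {x + y |x y. x \<in> A' \<and> y \<in> N}" by blast
  next
    fix a assume "a \<in> {x + y |x y. x \<in> A' \<and> y \<in> N}"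
    then show "a \<in> A" using AA N_def subspace_add[OF A] by auto
  qed
  have decB: "B = {x + y |x y. x \<in> B' \<and> y \<in> N}"
  proof (intro equalityI subsetI)
    fix a assume a: "a \<in> B"
    have "f a \<in> B'" using fB a .
    moreover have "a - f a \<in> N"
    proof -
      have "f a \<in> A" using subsetD[OF BA] subsetD[OF BB \<open>f a \<in> B'\<close>] by blast
      then have "a - f a \<in> A" using subspace_diff[OF A subsetD[OF BA a]] by blast
      moreover have "f (a - f a) = 0"
      proof -
        have "f (f a) = f a" by (rule fid[OF subsetD[OF BA' \<open>f a \<in> B'\<close>]])
        then show ?thesis by (simp only: fminus diff_self)
      qed
      ultimately show ?thesis unfolding N_def by blast
    qed
    moreover have "a = f a + (a - f a)" by simp
    ultimately show "a \<in> {x + y |x y. x \<in> B' \<and> y \<in> N}" by blast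
  next
    fix a assume "a \<in> {x + y |x y. x \<in> B' \<and> y \<in> N}"
    then show "a \<in> B" using NB subspace_add[OF B] BB by auto
  qed
  have int1: "A' \<inter> N \<subseteq> {0}" using fid N_def by auto
  have int2: "B' \<inter> N \<subseteq> {0}" using int1 BA' by blast
  have NW: "N \<subseteq> span W" using W(1) unfolding N_def by blast
  have A'W: "A' \<subseteq> span W" using AA W(1) by blast
  have B'W: "B' \<subseteq> span W" using BB BA W(1) by blast
  have "dim A = dim A' + dim N"
    using dim_direct_sum[OF A' N int1 A'W NW W(2)] decA[symmetric] by simp
  moreover have "dim B = dim B' + dim N"
    using dim_direct_sum[OF B' N int2 B'W NW W(2)] decB[symmetric] by simp
  ultimately show ?thesis by simp
qed
end



definition hmap :: "'v::linorder \<Rightarrow> 'v \<Rightarrow> ('v set \<Rightarrow> 'f::field) \<Rightarrow> 'v set \<Rightarrow> 'f" where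
  "hmap u v c \<rho> = (if u \<in> \<rho> \<and> v \<in> \<rho> then (-1) ^ card {x\<in>\<rho>. x < v} * c (\<rho> - {v}) else 0)"

definition Pmap :: "'v::linorder set \<Rightarrow> 'v \<Rightarrow> 'v \<Rightarrow> nat \<Rightarrow> ('v set \<Rightarrow> 'f::field) \<Rightarrow> 'v set \<Rightarrow> 'f" where
  "Pmap V u v k c = c - bdry V (Suc k) (hmap u v c) - hmap u v (bdry V k c)"

definition avoid :: "'v \<Rightarrow> ('v set \<Rightarrow> 'f::field) \<Rightarrow> bool" where
  "avoid u c \<longleftrightarrow> (\<forall>\<sigma>. u \<in> \<sigma> \<longrightarrow> c \<sigma> = 0)"

definition closedK :: "'v set set \<Rightarrow> bool" where
  "closedK K \<longleftrightarrow> (\<forall>\<sigma>\<in>K. \<forall>\<tau>. \<tau> \<subseteq> \<sigma> \<longrightarrow> \<tau> \<noteq> {} \<longrightarrow> \<tau> \<in> K)"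

definition domK :: "'v \<Rightarrow> 'v \<Rightarrow> 'v set set \<Rightarrow> bool" where
  "domK u v K \<longleftrightarrow> (\<forall>\<sigma>\<in>K. u \<in> \<sigma> \<longrightarrow> 2 \<le> card \<sigma> \<longrightarrow> insert v \<sigma> \<in> K)"

lemma bdry_add: "bdry V k (c + d) = bdry V k c + bdry V k d"
  by (auto simp: fun_eq_iff bdry_def sum.distrib algebra_simps)

lemma bdry_diff: "bdry V k (c - d) = bdry V k c - bdry V k d"
  by (auto simp: fun_eq_iff bdry_def sum_subtractf algebra_simps)

lemma bdry_scale: "bdry V k (\<lambda>x. a * c x) = (\<lambda>x. a * bdry V k c x)"
  by (auto simp: fun_eq_iff bdry_def sum_distrib_left algebra_simps)

lemma bdry_zero[simp]: "bdry V k 0 = 0"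
  by (auto simp: fun_eq_iff bdry_def)

lemma hmap_add: "hmap u v (c + d) = hmap u v c + hmap u v d"
  by (auto simp: fun_eq_iff hmap_def algebra_simps)

lemma hmap_diff: "hmap u v (c - d) = hmap u v c - hmap u v d"
  by (auto simp: fun_eq_iff hmap_def algebra_simps)

lemma hmap_scale: "hmap u v (\<lambda>x. a * c x) = (\<lambda>x. a * hmap u v c x)"
  by (auto simp: fun_eq_iff hmap_def algebra_simps)

lemma hmap_zero[simp]: "hmap u v 0 = 0"
  by (auto simp: fun_eq_iff hmap_def)

lemma Pmap_add: "Pmap V u v k (c + d) = Pmap V u v k c + Pmap V u v k d"
  by (simp add: Pmap_def bdry_add hmap_add algebra_simps)

lemma Pmap_diff: "Pmap V u v k (c - d) = Pmap V u v k c - Pmap V u v k d"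
  by (simp add: Pmap_def bdry_diff hmap_diff algebra_simps)

lemma Pmap_scale: "Pmap V u v k (\<lambda>x. a * c x) = (\<lambda>x. a * Pmap V u v k c x)"
  by (simp add: Pmap_def bdry_scale hmap_scale fun_eq_iff algebra_simps)

lemma Pmap_zero[simp]: "Pmap V u v k 0 = 0"
  by (simp add: Pmap_def)

lemma card_lt_insert:
  assumes "finite \<rho>" "w \<notin> \<rho>"
  shows "card {x\<in>insert w \<rho>. x < v} = card {x\<in>\<rho>. x < v} + (if w < v then 1 else 0)"
proof (cases "w < v")
  case True
  then have "{x\<in>insert w \<rho>. x < v} = insert w {x\<in>\<rho>. x < v}" by auto
  then show ?thesis using assms True by simp
next
  case False
  then have "{x\<in>insert w \<rho>. x < v} = {x\<in>\<rho>. x < v}" by auto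
  then show ?thesis using False by simp
qed

lemma neg1_sq: "(-1::'f::field) ^ n * (-1) ^ n = 1"
  by (simp add: power_mult_distrib[symmetric])

lemma antisym_double_sum:
  fixes F :: "'a::linorder \<Rightarrow> 'a \<Rightarrow> 'b::ab_group_add"
  assumes fin: "finite A" and anti: "\<And>w w'. w \<in> A \<Longrightarrow> w' \<in> A \<Longrightarrow> w < w' \<Longrightarrow> F w' w = - F w w'"
  shows "(\<Sum>w\<in>A. \<Sum>w'\<in>A - {w}. F w w') = 0"
proof -
  have split: "(\<Sum>w'\<in>A - {w}. F w w') = (\<Sum>w'\<in>{w'. w' \<in> A \<and> w < w'}. F w w') + (\<Sum>w'\<in>{w'. w' \<in> A \<and> w' < w}. F w w')" for w
  proof -
    have "A - {w} = {w'. w' \<in> A \<and> w < w'} \<union> {w'. w' \<in> A \<and> w' < w}" by auto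
    moreover have "{w'. w' \<in> A \<and> w < w'} \<inter> {w'. w' \<in> A \<and> w' < w} = {}" by auto
    ultimately show ?thesis using fin by (simp add: sum.union_disjoint)
  qed
  have sw: "(\<Sum>w\<in>A. \<Sum>w'\<in>{w'. w' \<in> A \<and> w' < w}. F w w') = (\<Sum>w'\<in>A. \<Sum>w\<in>{w. w \<in> A \<and> w' < w}. F w w')"
    by (rule sum.swap_restrict[OF fin fin])
  also have "\<dots> = (\<Sum>w'\<in>A. \<Sum>w\<in>{w. w \<in> A \<and> w' < w}. - F w' w)"
    by (intro sum.cong refl) (auto intro: anti)
  also have "\<dots> = - (\<Sum>w\<in>A. \<Sum>w'\<in>{w'. w' \<in> A \<and> w < w'}. F w w')"
    by (simp add: sum_negf)
  finally show ?thesis by (simp add: split sum.distrib)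
qed

lemma bdry_bdry:
  assumes "finite V"
  shows "bdry V k (bdry V (Suc k) c) = 0"
proof
  fix \<rho>
  show "bdry V k (bdry V (Suc k) c) \<rho> = 0 \<rho>"
  proof (cases "k \<ge> 1 \<and> card \<rho> = k")
    case False then show ?thesis by (auto simp: bdry_def)
  next
    case True
    then have fin: "finite \<rho>" using card.infinite by force
    define A where "A = V - \<rho>"
    define F where "F w w' = (-1::'b) ^ card {x\<in>\<rho>. x < w} * ((-1) ^ card {x\<in>insert w \<rho>. x < w'} * c (insert w' (insert w \<rho>)))" for w w'
    have "bdry V k (bdry V (Suc k) c) \<rho> = (\<Sum>w\<in>A. \<Sum>w'\<in>A - {w}. F w w')"
      unfolding bdry_def A_def F_def using True fin
      by (auto simp: sum_distrib_left Diff_insert2[symmetric] intro!: sum.cong)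
    also have "\<dots> = 0"
    proof (rule antisym_double_sum)
      show "finite A" using assms A_def by simp
    next
      fix w w' assume w: "w \<in> A" "w' \<in> A" "w < w'"
      have nw: "w \<notin> \<rho>" "w' \<notin> \<rho>" using w A_def by auto
      have e: "insert w (insert w' \<rho>) = insert w' (insert w \<rho>)" by auto
      have c1: "card {x\<in>insert w' \<rho>. x < w} = card {x\<in>\<rho>. x < w}"
        using card_lt_insert[OF fin nw(2), of w] w by simp
      have c2: "card {x\<in>insert w \<rho>. x < w'} = card {x\<in>\<rho>. x < w'} + 1"
        using card_lt_insert[OF fin nw(1), of w'] w by simp
      show "F w' w = - F w w'"
        unfolding F_def c1 c2 e by (simp add: power_add algebra_simps)
    qed
    finally show ?thesis by simp
  qed
qed




lemma is_walk_succ: "is_walk V E xs x y \<longleftrightarrow> xs \<noteq> [] \<and> hd xs = x \<and> last xs = y \<and> set xs \<subseteq> V \<and> successively E xs"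
  unfolding is_walk_def successively_conv_nth by blast

lemma gdist_le: "is_walk V E xs x y \<Longrightarrow> gdist V E x y \<le> enat (length xs - 1)"
  unfolding gdist_def by (rule Inf_lower) blast

lemma gdist_ge: "(\<And>xs. is_walk V E xs x y \<Longrightarrow> m \<le> enat (length xs - 1)) \<Longrightarrow> m \<le> gdist V E x y"
  unfolding gdist_def by (rule Inf_greatest) blast

lemma gdist_mono_walks:
  assumes "\<And>xs. is_walk V E xs x y \<Longrightarrow> \<exists>ys. is_walk V' E' ys x' y' \<and> length ys \<le> length xs"
  shows "gdist V' E' x' y' \<le> gdist V E x y"
proof (rule gdist_ge)
  fix xs assume "is_walk V E xs x y"
  then obtain ys where "is_walk V' E' ys x' y'" "length ys \<le> length xs" using assms by blast
  then have "gdist V' E' x' y' \<le> enat (length ys - 1)" using gdist_le[of V' E' ys x' y'] by simp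
  also have "\<dots> \<le> enat (length xs - 1)" using \<open>length ys \<le> length xs\<close> by simp
  finally show "gdist V' E' x' y' \<le> enat (length xs - 1)" .
qed

lemma gdist_sym:
  assumes "simple_graph V E"
  shows "gdist V E x y = gdist V E y x"
proof -
  have sym: "E a b \<Longrightarrow> E b a" for a b using assms by (simp add: simple_graph_def)
  have *: "gdist V E a b \<le> gdist V E b a" for a b
  proof (rule gdist_mono_walks)
    fix xs assume w: "is_walk V E xs b a"
    have "successively (\<lambda>x y. E y x) xs" using w unfolding is_walk_succ
      by (auto intro: successively_mono sym)
    then have "is_walk V E (rev xs) a b" using w unfolding is_walk_succ
      by (auto simp: hd_rev last_rev)
    then show "\<exists>ys. is_walk V E ys a b \<and> length ys \<le> length xs" by force
  qed
  show ?thesis using *[of x y] *[of y x] by simp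
qed

lemma dom_edge:
  assumes g: "simple_graph V E" and d: "dominated_by V E u v"
  shows "E u v"
proof -
  have "u \<in> closed_nbhd E v" using d by (auto simp: dominated_by_def closed_nbhd_def)
  then have "E v u" using d by (auto simp: dominated_by_def closed_nbhd_def)
  then show ?thesis using g by (simp add: simple_graph_def)
qed

lemma dom_nbr:
  assumes d: "dominated_by V E u v" and "E u b"
  shows "b = v \<or> E v b"
  using d assms(2) by (auto simp: dominated_by_def closed_nbhd_def)

lemma gdist_dom:
  assumes g: "simple_graph V E" and d: "dominated_by V E u v" and xu: "x \<noteq> u"
  shows "gdist V E v x \<le> gdist V E u x"
proof (rule gdist_mono_walks)
  fix xs assume w: "is_walk V E xs u x"
  then obtain b r where xs: "xs = u # b # r"
    using xu unfolding is_walk_def by (cases xs; cases "tl xs") auto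
  have wb: "is_walk V E (b # r) b x" "E u b" using w xs unfolding is_walk_succ by auto
  show "\<exists>ys. is_walk V E ys v x \<and> length ys \<le> length xs"
  proof (cases "b = v")
    case True then show ?thesis using wb xs by (intro exI[of _ "b # r"]) auto
  next
    case False
    then have "E v b" using dom_nbr[OF d wb(2)] by simp
    moreover have "v \<in> V" using d by (simp add: dominated_by_def)
    ultimately have "is_walk V E (v # b # r) v x" using wb unfolding is_walk_succ by auto
    then show ?thesis using xs by (intro exI[of _ "v # b # r"]) auto
  qed
qed

lemma gdist_pos:
  assumes "x \<noteq> y" shows "1 \<le> gdist V E x y"
proof (rule gdist_ge)
  fix xs assume "is_walk V E xs x y"
  then have "length xs \<ge> 2" using assms unfolding is_walk_def
    by (cases xs; cases "tl xs") auto
  then show "1 \<le> enat (length xs - 1)" by (simp add: one_enat_def)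
qed

lemma gdist_edge: "E a b \<Longrightarrow> a \<in> V \<Longrightarrow> b \<in> V \<Longrightarrow> gdist V E a b \<le> 1"
  using gdist_le[of V E "[a, b]" a b] unfolding is_walk_def
  by (auto simp: one_enat_def nth_Cons split: nat.splits)

lemma gdist_del:
  assumes g: "simple_graph V E" and d: "dominated_by V E u v"
    and x: "x \<in> V - {u}" and y: "y \<in> V - {u}"
  shows "gdist (V - {u}) (del_edges E u) x y = gdist V E x y"
proof (rule antisym)
  show "gdist V E x y \<le> gdist (V - {u}) (del_edges E u) x y"
  proof (rule gdist_mono_walks)
    fix xs assume "is_walk (V - {u}) (del_edges E u) xs x y"
    then have "is_walk V E xs x y" unfolding is_walk_succ del_edges_def
      by (auto intro: successively_mono)
    then show "\<exists>ys. is_walk V E ys x y \<and> length ys \<le> length xs" by blast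
  qed
next
  show "gdist (V - {u}) (del_edges E u) x y \<le> gdist V E x y"
  proof (rule gdist_mono_walks)
    fix xs assume w: "is_walk V E xs x y"
    define f where "f z = (if z = u then v else z)" for z
    define E' where "E' = del_edges E u"
    have vV: "v \<in> V" "v \<noteq> u" using d by (auto simp: dominated_by_def)
    have step: "E' (f a) (f b) \<or> f a = f b" if "E a b" for a b
    proof -
      have ab: "a \<noteq> b" using that g by (auto simp: simple_graph_def)
      have ba: "E b a" using that g by (simp add: simple_graph_def)
      show ?thesis
      proof (cases "a = u")
        case True
        then have "b \<noteq> u" using ab by simp
        then show ?thesis using dom_nbr[OF d, of b] True that vV g
          by (auto simp: f_def E'_def del_edges_def)
      next
        case False
        show ?thesis
        proof (cases "b = u")
          case True
          have "a = v \<or> E v a" using dom_nbr[OF d, of a] ba True by simp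
          then show ?thesis using True False vV g
            by (auto simp: f_def E'_def del_edges_def simple_graph_def)
        next
          case False2: False
          then show ?thesis using False that by (simp add: f_def E'_def del_edges_def)
        qed
      qed
    qed
    have ws: "successively E xs" "xs \<noteq> []" "hd xs = x" "last xs = y" "set xs \<subseteq> V"
      using w unfolding is_walk_succ by auto
    let ?ys = "map f xs"
    have s1: "successively (\<lambda>a b. E' a b \<or> a = b) ?ys"
      unfolding successively_map using ws(1) by (rule successively_mono) (use step in blast)
    have s2: "successively (\<lambda>a b. E' a b \<or> a = b) (remdups_adj ?ys)"
      by (rule successively_remdups_adjI[OF s1])
    have s3: "successively E' (remdups_adj ?ys)"
      using s2 remdups_adj_adjacent[of _ ?ys] unfolding successively_conv_nth by blast
    have hd: "hd ?ys = x" "last ?ys = y" using ws x y by (auto simp: f_def hd_map last_map)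
    have st: "set ?ys \<subseteq> V - {u}" using ws vV by (auto simp: f_def)
    have "is_walk (V - {u}) E' (remdups_adj ?ys) x y"
      unfolding is_walk_succ using s3 hd st ws(2) by simp
    moreover have "length (remdups_adj ?ys) \<le> length xs"
      using remdups_adj_length[of ?ys] by simp
    ultimately show "\<exists>ys. is_walk (V - {u}) (del_edges E u) ys x y \<and> length ys \<le> length xs"
      unfolding E'_def by blast
  qed
qed

lemma pc_del:
  assumes g: "simple_graph V E" and d: "dominated_by V E u v"
  shows "power_complex (del_vertices V u) (del_edges E u) n = {\<sigma> \<in> power_complex V E n. u \<notin> \<sigma>}"
proof -
  have "\<sigma> \<in> power_complex (V - {u}) (del_edges E u) n \<longleftrightarrow> \<sigma> \<in> power_complex V E n \<and> u \<notin> \<sigma>" for \<sigma>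
  proof
    assume a: "\<sigma> \<in> power_complex (V - {u}) (del_edges E u) n"
    then have s: "\<sigma> \<subseteq> V - {u}" by (simp add: power_complex_def)
    have "\<forall>x\<in>\<sigma>. \<forall>y\<in>\<sigma>. x \<noteq> y \<longrightarrow> gdist V E x y \<le> n"
    proof (intro ballI impI)
      fix x y assume xy: "x \<in> \<sigma>" "y \<in> \<sigma>" "x \<noteq> y"
      have "gdist V E x y = gdist (V - {u}) (del_edges E u) x y"
        using gdist_del[OF g d, of x y] xy(1,2) s by (simp add: subset_iff)
      also have "\<dots> \<le> n" using a xy unfolding power_complex_def by auto
      finally show "gdist V E x y \<le> n" .
    qed
    then show "\<sigma> \<in> power_complex V E n \<and> u \<notin> \<sigma>" using a s unfolding power_complex_def by auto
  next
    assume a: "\<sigma> \<in> power_complex V E n \<and> u \<notin> \<sigma>"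
    then have s: "\<sigma> \<subseteq> V - {u}" by (auto simp: power_complex_def)
    have "\<forall>x\<in>\<sigma>. \<forall>y\<in>\<sigma>. x \<noteq> y \<longrightarrow> gdist (V - {u}) (del_edges E u) x y \<le> n"
    proof (intro ballI impI)
      fix x y assume xy: "x \<in> \<sigma>" "y \<in> \<sigma>" "x \<noteq> y"
      have "gdist (V - {u}) (del_edges E u) x y = gdist V E x y"
        using gdist_del[OF g d, of x y] xy(1,2) s by (simp add: subset_iff)
      also have "\<dots> \<le> n" using a xy unfolding power_complex_def by auto
      finally show "gdist (V - {u}) (del_edges E u) x y \<le> n" .
    qed
    then show "\<sigma> \<in> power_complex (V - {u}) (del_edges E u) n" using a s unfolding power_complex_def by auto
  qed
  then show ?thesis unfolding del_vertices_def by auto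
qed




lemma card_Suc_finite: "card \<sigma> = Suc k \<Longrightarrow> finite \<sigma>"
  by (rule ccontr) simp

lemma closedKD: "closedK K \<Longrightarrow> \<sigma> \<in> K \<Longrightarrow> \<tau> \<subseteq> \<sigma> \<Longrightarrow> \<tau> \<noteq> {} \<Longrightarrow> \<tau> \<in> K"
  unfolding closedK_def by blast

lemma domKD: "domK u v K \<Longrightarrow> \<sigma> \<in> K \<Longrightarrow> u \<in> \<sigma> \<Longrightarrow> 2 \<le> card \<sigma> \<Longrightarrow> insert v \<sigma> \<in> K"
  unfolding domK_def by blast

lemma chainsD: "c \<in> chains K k \<Longrightarrow> c \<sigma> \<noteq> 0 \<Longrightarrow> \<sigma> \<in> K \<and> card \<sigma> = Suc k"
  unfolding chains_def by blast

lemma bdry_nz: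
  assumes "bdry V k c \<tau> \<noteq> 0"
  shows "card \<tau> = k \<and> (\<exists>w\<in>V - \<tau>. c (insert w \<tau>) \<noteq> 0)"
proof -
  have ct: "k \<ge> 1 \<and> card \<tau> = k" using assms by (simp add: bdry_def split: if_splits)
  then have "(\<Sum>w\<in>V - \<tau>. (-1) ^ card {x\<in>\<tau>. x < w} * c (insert w \<tau>)) \<noteq> 0"
    using assms by (simp add: bdry_def)
  then obtain w where "w \<in> V - \<tau>" "(-1) ^ card {x\<in>\<tau>. x < w} * c (insert w \<tau>) \<noteq> 0"
    by (rule sum.not_neutral_contains_not_neutral)
  then show ?thesis using ct by auto
qed

lemma bdry_chains:
  assumes cl: "closedK K" and c: "c \<in> chains K (Suc k)"
  shows "bdry V (Suc k) c \<in> chains K k"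
  unfolding chains_def
proof (intro CollectI allI impI)
  fix \<tau> assume nz: "bdry V (Suc k) c \<tau> \<noteq> 0"
  from bdry_nz[OF nz] obtain w where ct: "card \<tau> = Suc k" and w: "w \<in> V - \<tau>" "c (insert w \<tau>) \<noteq> 0"
    by blast
  have "insert w \<tau> \<in> K" using chainsD[OF c w(2)] by simp
  moreover have "\<tau> \<noteq> {}" using ct by auto
  ultimately have "\<tau> \<in> K" using closedKD[OF cl] by (meson subset_insertI)
  then show "\<tau> \<in> K \<and> card \<tau> = Suc k" using ct by simp
qed

lemma hmap_chains:
  assumes k: "k \<ge> 1" and dom: "domK u v K" and uv: "u \<noteq> v" and c: "c \<in> chains K k"
  shows "hmap u v c \<in> chains K (Suc k)"
  unfolding chains_def
proof (intro CollectI allI impI)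
  fix \<rho> assume nz: "hmap u v c \<rho> \<noteq> 0"
  then have uv\<rho>: "u \<in> \<rho>" "v \<in> \<rho>" and cz: "c (\<rho> - {v}) \<noteq> 0" by (auto simp: hmap_def split: if_splits)
  have K: "\<rho> - {v} \<in> K" "card (\<rho> - {v}) = Suc k" using chainsD[OF c cz] by auto
  have "u \<in> \<rho> - {v}" using uv\<rho> uv by simp
  moreover have "2 \<le> card (\<rho> - {v})" using K k by simp
  ultimately have "insert v (\<rho> - {v}) \<in> K" using domKD[OF dom K(1)] by simp
  moreover have e: "insert v (\<rho> - {v}) = \<rho>" using uv\<rho> by auto
  moreover have "finite (\<rho> - {v})" using card_Suc_finite[OF K(2)] .
  ultimately show "\<rho> \<in> K \<and> card \<rho> = Suc (Suc k)"
    using K card_insert_disjoint[of "\<rho> - {v}" v] by simp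
qed

lemma hbd_chains:
  assumes k: "k \<ge> 1" and cl: "closedK K" and dom: "domK u v K" and uv: "u \<noteq> v" and c: "c \<in> chains K k"
  shows "hmap u v (bdry V k c) \<in> chains K k"
  unfolding chains_def
proof (intro CollectI allI impI)
  fix \<sigma> assume nz: "hmap u v (bdry V k c) \<sigma> \<noteq> 0"
  then have uv\<sigma>: "u \<in> \<sigma>" "v \<in> \<sigma>" and bz: "bdry V k c (\<sigma> - {v}) \<noteq> 0"
    by (auto simp: hmap_def split: if_splits)
  define \<tau> where "\<tau> = \<sigma> - {v}"
  from bdry_nz[OF bz[unfolded \<tau>_def[symmetric]]] obtain w where ct: "card \<tau> = k"
    and w: "w \<in> V - \<tau>" "c (insert w \<tau>) \<noteq> 0" by blast
  have \<rho>: "insert w \<tau> \<in> K" "card (insert w \<tau>) = Suc k" using chainsD[OF c w(2)] by auto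
  have "u \<in> insert w \<tau>" using uv\<sigma> uv \<tau>_def by simp
  moreover have "2 \<le> card (insert w \<tau>)" using \<rho> k by simp
  ultimately have vK: "insert v (insert w \<tau>) \<in> K" using domKD[OF dom \<rho>(1)] by simp
  have sub: "\<sigma> \<subseteq> insert v (insert w \<tau>)" using \<tau>_def by auto
  have ne: "\<sigma> \<noteq> {}" using uv\<sigma> by auto
  have "\<sigma> \<in> K" using closedKD[OF cl vK sub ne] .
  moreover have "finite \<tau>" using ct k card.infinite by force
  moreover have "\<sigma> = insert v \<tau>" "v \<notin> \<tau>" using uv\<sigma> \<tau>_def by auto
  ultimately show "\<sigma> \<in> K \<and> card \<sigma> = Suc k" using ct by simp
qed

lemma chains_diff: assumes "c \<in> chains K k" "d \<in> chains K k" shows "c - d \<in> chains K k"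
  unfolding chains_def
proof (intro CollectI allI impI)
  fix \<sigma> assume "(c - d) \<sigma> \<noteq> 0"
  then have "c \<sigma> \<noteq> 0 \<or> d \<sigma> \<noteq> 0" by auto
  then show "\<sigma> \<in> K \<and> card \<sigma> = Suc k" using assms unfolding chains_def by blast
qed

lemma chains_add: assumes "c \<in> chains K k" "d \<in> chains K k" shows "c + d \<in> chains K k"
  unfolding chains_def
proof (intro CollectI allI impI)
  fix \<sigma> assume "(c + d) \<sigma> \<noteq> 0"
  then have "c \<sigma> \<noteq> 0 \<or> d \<sigma> \<noteq> 0" by auto
  then show "\<sigma> \<in> K \<and> card \<sigma> = Suc k" using assms unfolding chains_def by blast
qed

lemma chains_zero: "0 \<in> chains K k"
  by (auto simp: chains_def)

lemma chains_mono: "K \<subseteq> L \<Longrightarrow> c \<in> chains K k \<Longrightarrow> c \<in> chains L k"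
  by (auto simp: chains_def)

lemma Pmap_chains:
  assumes k: "k \<ge> 1" and cl: "closedK K" and dom: "domK u v K" and uv: "u \<noteq> v" and c: "c \<in> chains K k"
  shows "Pmap V u v k c \<in> chains K k"
  unfolding Pmap_def
  by (intro chains_diff c bdry_chains[OF cl] hmap_chains[OF k dom uv] hbd_chains[OF k cl dom uv])

lemma key_identity:
  assumes V: "finite V" "v \<in> V" and uv: "u \<noteq> v" and u\<sigma>: "u \<in> \<sigma>" and cs: "card \<sigma> = Suc k" and k: "k \<ge> 1"
  shows "c \<sigma> = bdry V (Suc k) (hmap u v c) \<sigma> + hmap u v (bdry V k c) \<sigma>"
proof -
  have fin: "finite \<sigma>" using cs card_Suc_finite by blast
  show ?thesis
  proof (cases "v \<in> \<sigma>")
    case False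
    have h0: "hmap u v (bdry V k c) \<sigma> = 0" using False by (simp add: hmap_def)
    have vin: "v \<in> V - \<sigma>" using V False by auto
    have "bdry V (Suc k) (hmap u v c) \<sigma> = (\<Sum>w\<in>V - \<sigma>. (-1) ^ card {x\<in>\<sigma>. x < w} * hmap u v c (insert w \<sigma>))"
      using cs by (simp add: bdry_def)
    also have "\<dots> = (-1) ^ card {x\<in>\<sigma>. x < v} * hmap u v c (insert v \<sigma>)
        + (\<Sum>w\<in>V - \<sigma> - {v}. (-1) ^ card {x\<in>\<sigma>. x < w} * hmap u v c (insert w \<sigma>))"
      using V vin by (simp add: sum.remove)
    also have "(\<Sum>w\<in>V - \<sigma> - {v}. (-1) ^ card {x\<in>\<sigma>. x < w} * hmap u v c (insert w \<sigma>)) = 0"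
      using False by (intro sum.neutral) (auto simp: hmap_def)
    also have "hmap u v c (insert v \<sigma>) = (-1) ^ card {x\<in>\<sigma>. x < v} * c \<sigma>"
    proof -
      have "card {x\<in>insert v \<sigma>. x < v} = card {x\<in>\<sigma>. x < v}" using card_lt_insert[OF fin False, of v] by simp
      moreover have "insert v \<sigma> - {v} = \<sigma>" using False by auto
      ultimately show ?thesis using u\<sigma> by (simp add: hmap_def)
    qed
    finally show ?thesis using h0 by (simp add: neg1_sq mult.assoc[symmetric])
  next
    case True
    define \<tau> where "\<tau> = \<sigma> - {v}"
    have \<sigma>\<tau>: "\<sigma> = insert v \<tau>" "v \<notin> \<tau>" using True \<tau>_def by auto
    have ft: "finite \<tau>" using fin \<tau>_def by simp
    have ct: "card \<tau> = k" using cs \<sigma>\<tau> ft by simp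
    have sv: "card {x\<in>\<sigma>. x < v} = card {x\<in>\<tau>. x < v}" using card_lt_insert[OF ft \<sigma>\<tau>(2), of v] \<sigma>\<tau> by simp
    define R where "R = (\<Sum>w\<in>V - \<sigma>. (-1) ^ card {x\<in>\<tau>. x < w} * c (insert w \<tau>))"
    have VT: "V - \<tau> = insert v (V - \<sigma>)" "v \<notin> V - \<sigma>" using V \<sigma>\<tau> by auto
    have "hmap u v (bdry V k c) \<sigma> = (-1) ^ card {x\<in>\<sigma>. x < v} * bdry V k c \<tau>"
      using u\<sigma> True by (simp add: hmap_def \<tau>_def)
    also have "bdry V k c \<tau> = (\<Sum>w\<in>V - \<tau>. (-1) ^ card {x\<in>\<tau>. x < w} * c (insert w \<tau>))"
      using ct k by (simp add: bdry_def)
    also have "\<dots> = (-1) ^ card {x\<in>\<tau>. x < v} * c \<sigma> + R"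
      unfolding VT(1) R_def using V VT(2) \<sigma>\<tau> by (simp add: sum.insert)
    finally have H: "hmap u v (bdry V k c) \<sigma> = c \<sigma> + (-1) ^ card {x\<in>\<sigma>. x < v} * R"
      by (simp add: sv distrib_left neg1_sq mult.assoc[symmetric])
    have "bdry V (Suc k) (hmap u v c) \<sigma> = (\<Sum>w\<in>V - \<sigma>. (-1) ^ card {x\<in>\<sigma>. x < w} * hmap u v c (insert w \<sigma>))"
      using cs by (simp add: bdry_def)
    also have "\<dots> = (\<Sum>w\<in>V - \<sigma>. - ((-1) ^ card {x\<in>\<sigma>. x < v} * ((-1) ^ card {x\<in>\<tau>. x < w} * c (insert w \<tau>))))"
    proof (intro sum.cong refl)
      fix w assume w: "w \<in> V - \<sigma>"
      have wv: "w \<noteq> v" "w \<notin> \<tau>" "w \<notin> \<sigma>" using w \<sigma>\<tau> by auto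
      have e1: "insert w \<sigma> - {v} = insert w \<tau>" using \<sigma>\<tau> wv by auto
      have e2: "card {x\<in>insert w \<sigma>. x < v} = card {x\<in>\<sigma>. x < v} + (if w < v then 1 else 0)"
        using card_lt_insert[OF fin wv(3)] .
      have e3: "card {x\<in>\<sigma>. x < w} = card {x\<in>\<tau>. x < w} + (if v < w then 1 else 0)"
        using card_lt_insert[OF ft \<sigma>\<tau>(2), of w] \<sigma>\<tau> by simp
      have hm: "hmap u v c (insert w \<sigma>) = (-1) ^ (card {x\<in>\<sigma>. x < v} + (if w < v then 1 else 0)) * c (insert w \<tau>)"
        unfolding hmap_def e2[symmetric] e1[symmetric] using u\<sigma> True by simp
      show "(-1) ^ card {x\<in>\<sigma>. x < w} * hmap u v c (insert w \<sigma>) =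
          - ((-1) ^ card {x\<in>\<sigma>. x < v} * ((-1) ^ card {x\<in>\<tau>. x < w} * c (insert w \<tau>)))"
        unfolding hm e3 using wv(1) by (cases "w < v") (auto simp: power_add algebra_simps)
    qed
    also have "\<dots> = - ((-1) ^ card {x\<in>\<sigma>. x < v} * R)"
      unfolding R_def by (simp add: sum_negf sum_distrib_left)
    finally show ?thesis using H by simp
  qed
qed

lemma Pmap_avoid:
  assumes V: "finite V" "v \<in> V" and k: "k \<ge> 1" and cl: "closedK K" and dom: "domK u v K"
    and uv: "u \<noteq> v" and c: "c \<in> chains K k"
  shows "avoid u (Pmap V u v k c)"
  unfolding avoid_def
proof (intro allI impI)
  fix \<sigma> assume u\<sigma>: "u \<in> \<sigma>"
  show "Pmap V u v k c \<sigma> = 0"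
  proof (rule ccontr)
    assume nz: "Pmap V u v k c \<sigma> \<noteq> 0"
    then have "card \<sigma> = Suc k" using Pmap_chains[OF k cl dom uv c, of V] by (auto simp: chains_def)
    from key_identity[OF V uv u\<sigma> this k, of c] have "Pmap V u v k c \<sigma> = 0"
      by (simp add: Pmap_def)
    with nz show False by simp
  qed
qed

lemma bdry_avoid: "avoid u c \<Longrightarrow> avoid u (bdry V k c)"
  by (auto simp: avoid_def bdry_def intro!: sum.neutral)

lemma hmap_avoid0: "u \<noteq> v \<Longrightarrow> avoid u c \<Longrightarrow> hmap u v c = 0"
  by (auto simp: avoid_def hmap_def fun_eq_iff)

lemma Pmap_fix: "u \<noteq> v \<Longrightarrow> avoid u c \<Longrightarrow> Pmap V u v k c = c"
  by (simp add: Pmap_def hmap_avoid0 bdry_avoid)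

lemma Pmap_chain_map:
  assumes "finite V"
  shows "bdry V (Suc m) (Pmap V u v (Suc m) c) = Pmap V u v m (bdry V (Suc m) c)"
  by (simp add: Pmap_def bdry_diff bdry_bdry[OF assms])

lemma bdry_avoid_eq:
  assumes "avoid u c"
  shows "bdry (V - {u}) k c = bdry V k c"
proof
  fix \<tau>
  show "bdry (V - {u}) k c \<tau> = bdry V k c \<tau>"
  proof (cases "u \<in> V - \<tau>")
    case True
    have "V - \<tau> = insert u (V - {u} - \<tau>)" "u \<notin> V - {u} - \<tau>" using True by auto
    moreover have "c (insert u \<tau>) = 0" using assms by (simp add: avoid_def)
    ultimately show ?thesis
      by (cases "finite (V - {u} - \<tau>)") (simp_all add: bdry_def)
  next
    case False
    then have "V - {u} - \<tau> = V - \<tau>" by auto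
    then show ?thesis by (simp add: bdry_def)
  qed
qed




lemma sum_fun_apply: "(\<Sum>i\<in>A. f i) x = (\<Sum>i\<in>A. f i x)"
  by (induction A rule: infinite_finite_induct) auto

lemma chains_scale: "c \<in> chains K k \<Longrightarrow> (\<lambda>x. a * c x) \<in> chains K k"
  by (auto simp: chains_def)

lemma sub_chains: "fs.subspace (chains K k :: ('v set \<Rightarrow> 'f::field) set)"
  by (rule fs.subspaceI) (auto intro: chains_zero chains_add chains_scale)

lemma sub_cycles: "fs.subspace (cycles V K k :: ('v::linorder set \<Rightarrow> 'f::field) set)"
  unfolding cycles_def
  by (rule fs.subspaceI) (auto intro: chains_zero chains_add chains_scale simp: bdry_add bdry_scale)

lemma sub_bound: "fs.subspace (boundaries V K k :: ('v::linorder set \<Rightarrow> 'f::field) set)"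
  unfolding boundaries_def
proof (rule fs.subspaceI)
  show "(0::'v set \<Rightarrow> 'f) \<in> bdry V (Suc k) ` chains K (Suc k)"
    using chains_zero[of K "Suc k"] by (metis bdry_zero image_eqI)
next
  fix x y :: "'v set \<Rightarrow> 'f"
  assume "x \<in> bdry V (Suc k) ` chains K (Suc k)" "y \<in> bdry V (Suc k) ` chains K (Suc k)"
  then obtain c d where "x = bdry V (Suc k) c" "y = bdry V (Suc k) d" "c \<in> chains K (Suc k)" "d \<in> chains K (Suc k)"
    by blast
  then show "x + y \<in> bdry V (Suc k) ` chains K (Suc k)"
    using chains_add[of c K "Suc k" d] bdry_add[of V "Suc k" c d] by (metis image_eqI)
next
  fix a :: 'f and x :: "'v set \<Rightarrow> 'f"
  assume "x \<in> bdry V (Suc k) ` chains K (Suc k)"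
  then obtain c where "x = bdry V (Suc k) c" "c \<in> chains K (Suc k)" by blast
  then show "(\<lambda>y. a * x y) \<in> bdry V (Suc k) ` chains K (Suc k)"
    using chains_scale[of c K "Suc k" a] bdry_scale[of V "Suc k" a c] by (metis image_eqI)
qed

definition delta :: "'v set \<Rightarrow> 'v set \<Rightarrow> 'f::field" where
  "delta \<sigma> = (\<lambda>\<tau>. if \<tau> = \<sigma> then 1 else 0)"

lemma chains_span:
  assumes "finite V" "K \<subseteq> Pow V"
  shows "(chains K k :: ('v set \<Rightarrow> 'f::field) set) \<subseteq> fs.span (delta ` Pow V)"
proof
  fix c :: "'v set \<Rightarrow> 'f" assume c: "c \<in> chains K k"
  have eq: "c = (\<Sum>\<sigma>\<in>Pow V. (\<lambda>x. c \<sigma> * delta \<sigma> x))"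
  proof
    fix \<tau>
    have "(\<Sum>\<sigma>\<in>Pow V. (\<lambda>x. c \<sigma> * delta \<sigma> x)) \<tau> = (\<Sum>\<sigma>\<in>Pow V. c \<sigma> * delta \<sigma> \<tau>)"
      by (rule sum_fun_apply)
    also have "\<dots> = (if \<tau> \<in> Pow V then c \<tau> else 0)"
      using assms(1) by (simp add: delta_def if_distrib sum.delta' cong: if_cong)
    also have "\<dots> = c \<tau>" using c assms(2) by (auto simp: chains_def)
    finally show "c \<tau> = (\<Sum>\<sigma>\<in>Pow V. (\<lambda>x. c \<sigma> * delta \<sigma> x)) \<tau>" by simp
  qed
  have "(\<Sum>\<sigma>\<in>Pow V. (\<lambda>x. c \<sigma> * delta \<sigma> x)) \<in> fs.span (delta ` Pow V)"
    by (intro fs.span_sum fs.span_scale fs.span_base) auto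
  then show "c \<in> fs.span (delta ` Pow V)" using eq by simp
qed

lemma chains_avoid: "chains {\<sigma>\<in>K. u \<notin> \<sigma>} k = {c \<in> chains K k. avoid u c}"
  by (auto simp: chains_def avoid_def)

lemma cycles_avoid: "cycles (V - {u}) {\<sigma>\<in>K. u \<notin> \<sigma>} k = {c \<in> cycles V K k. avoid u c}"
  unfolding cycles_def chains_avoid by (auto simp: bdry_avoid_eq)

lemma bound_avoid: "boundaries (V - {u}) {\<sigma>\<in>K. u \<notin> \<sigma>} k = bdry V (Suc k) ` {c \<in> chains K (Suc k). avoid u c}"
  unfolding boundaries_def chains_avoid by (rule image_cong) (auto simp: bdry_avoid_eq)


lemma pers_core:
  fixes Ki Kj :: "'v::linorder set set"
  assumes V: "finite V" "u \<in> V" "v \<in> V" and uv: "u \<noteq> v" and k: "k \<ge> 1"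
    and KK: "Ki \<subseteq> Kj" and KP: "Kj \<subseteq> Pow V"
    and cli: "closedK Ki" and clj: "closedK Kj" and domi: "domK u v Ki" and domj: "domK u v Kj"
  shows "dimF {z + b | z b. z \<in> (cycles V Ki k :: ('v set \<Rightarrow> 'f::field) set) \<and> b \<in> boundaries V Kj k}
           - dimF (boundaries V Kj k :: ('v set \<Rightarrow> 'f) set)
       = dimF {z + b | z b. z \<in> (cycles (V - {u}) {\<sigma>\<in>Ki. u \<notin> \<sigma>} k :: ('v set \<Rightarrow> 'f) set)
                 \<and> b \<in> boundaries (V - {u}) {\<sigma>\<in>Kj. u \<notin> \<sigma>} k}
           - dimF (boundaries (V - {u}) {\<sigma>\<in>Kj. u \<notin> \<sigma>} k :: ('v set \<Rightarrow> 'f) set)"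
proof -
  define Zi where "Zi = (cycles V Ki k :: ('v set \<Rightarrow> 'f::field) set)"
  define Bj where "Bj = (boundaries V Kj k :: ('v set \<Rightarrow> 'f::field) set)"
  define Zi' where "Zi' = (cycles (V - {u}) {\<sigma>\<in>Ki. u \<notin> \<sigma>} k :: ('v set \<Rightarrow> 'f::field) set)"
  define Bj' where "Bj' = (boundaries (V - {u}) {\<sigma>\<in>Kj. u \<notin> \<sigma>} k :: ('v set \<Rightarrow> 'f::field) set)"
  define A where "A = {z + b | z b. z \<in> Zi \<and> b \<in> Bj}"
  define A' where "A' = {z + b | z b. z \<in> Zi' \<and> b \<in> Bj'}"
  define P where "P = (Pmap V u v k :: ('v set \<Rightarrow> 'f) \<Rightarrow> 'v set \<Rightarrow> 'f)"
  have Zi'c: "Zi' = {c \<in> Zi. avoid u c}" unfolding Zi'_def Zi_def by (rule cycles_avoid)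
  have Bj'c: "Bj' = bdry V (Suc k) ` {c \<in> chains Kj (Suc k). avoid u c}"
    unfolding Bj'_def by (rule bound_avoid)
  have Bjc: "Bj = bdry V (Suc k) ` chains Kj (Suc k)" unfolding Bj_def boundaries_def ..
  have sA: "fs.subspace A" unfolding A_def Zi_def Bj_def by (intro fs.subspace_sums sub_cycles sub_bound)
  have sA': "fs.subspace A'" unfolding A'_def Zi'_def Bj'_def by (intro fs.subspace_sums sub_cycles sub_bound)
  have sB: "fs.subspace Bj" unfolding Bj_def by (rule sub_bound)
  have sB': "fs.subspace Bj'" unfolding Bj'_def by (rule sub_bound)
  have Bch: "b \<in> chains Kj k" if "b \<in> Bj" for b
    using that bdry_chains[OF clj] unfolding Bjc by blast
  have Zch: "z \<in> chains Ki k" if "z \<in> Zi" for z using that unfolding Zi_def cycles_def by blast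
  have AW: "A \<subseteq> fs.span (delta ` Pow V)"
  proof
    fix a assume "a \<in> A"
    then obtain z b where a: "a = z + b" "z \<in> Zi" "b \<in> Bj" unfolding A_def by blast
    have "z \<in> chains (Pow V) k" using chains_mono[OF _ Zch[OF a(2)]] KK KP by blast
    moreover have "b \<in> chains (Pow V) k" using chains_mono[OF KP Bch[OF a(3)]] .
    ultimately have "a \<in> chains (Pow V) k" using a(1) chains_add by blast
    then show "a \<in> fs.span (delta ` Pow V)" using chains_span[OF V(1), of "Pow V" k] by blast
  qed
  have z0: "0 \<in> Zi" "0 \<in> Zi'" using fs.subspace_0[OF sub_cycles] unfolding Zi_def Zi'_def by blast+
  have BA: "Bj \<subseteq> A" unfolding A_def using z0 by force
  have BA': "Bj' \<subseteq> A'" unfolding A'_def using z0 by force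
  have BB: "Bj' \<subseteq> Bj" unfolding Bj'c Bjc by blast
  have AA: "A' \<subseteq> A" unfolding A'_def A_def using Zi'c BB by blast
  have Pch: "Pmap V u v m c \<in> chains K m" "avoid u (Pmap V u v m c)"
    if "c \<in> chains K m" "m \<ge> 1" "closedK K" "domK u v K" for c m K
    using Pmap_chains[OF that(2,3,4) uv that(1)] Pmap_avoid[OF V(1,3) that(2,3,4) uv that(1)] by auto
  obtain m where km: "k = Suc m" using k by (cases k) auto
  have PZ: "P z \<in> Zi'" if "z \<in> Zi" for z
  proof -
    have zc: "z \<in> chains Ki k" "bdry V k z = 0" using that unfolding Zi_def cycles_def by auto
    have "bdry V k (P z) = Pmap V u v m (bdry V k z)"
      unfolding P_def km by (rule Pmap_chain_map[OF V(1)])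
    also have "\<dots> = 0" using zc(2) km by simp
    finally show ?thesis unfolding Zi'c Zi_def cycles_def P_def using Pch[OF zc(1) k cli domi] by auto
  qed
  have PB: "P b \<in> Bj'" if hb: "b \<in> Bj" for b
  proof -
    obtain c where c: "b = bdry V (Suc k) c" "c \<in> chains Kj (Suc k)" using hb unfolding Bjc by blast
    have "P b = bdry V (Suc k) (Pmap V u v (Suc k) c)"
      unfolding P_def c(1) by (rule Pmap_chain_map[OF V(1), symmetric])
    moreover have "Pmap V u v (Suc k) c \<in> {c \<in> chains Kj (Suc k). avoid u c}"
      using Pch[OF c(2) _ clj domj] by auto
    ultimately show ?thesis unfolding Bj'c by blast
  qed
  have PA: "P a \<in> A'" if ha: "a \<in> A" for a
  proof -
    obtain z b where a: "a = z + b" "z \<in> Zi" "b \<in> Bj" using ha unfolding A_def by blast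
    have "P a = P z + P b" unfolding a(1) P_def by (rule Pmap_add)
    then show ?thesis unfolding A'_def using PZ[OF a(2)] PB[OF a(3)] by blast
  qed
  have avA': "avoid u x" if hx: "x \<in> A'" for x
  proof -
    obtain z b where a: "x = z + b" "z \<in> Zi'" "b \<in> Bj'" using hx unfolding A'_def by blast
    have "avoid u z" using a(2) Zi'c by blast
    moreover have "avoid u b" using a(3) unfolding Bj'c using bdry_avoid by blast
    ultimately show ?thesis unfolding a(1) avoid_def by simp
  qed
  have ker: "x \<in> Bj" if hx: "x \<in> A" and hP: "P x = 0" for x
  proof -
    obtain z b where a: "x = z + b" "z \<in> Zi" "b \<in> Bj" using hx unfolding A_def by blast
    obtain c where c: "b = bdry V (Suc k) c" "c \<in> chains Kj (Suc k)" using a(3) unfolding Bjc by blast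
    have zc: "z \<in> chains Ki k" "bdry V k z = 0" using a(2) unfolding Zi_def cycles_def by auto
    have e1: "z - P z = bdry V (Suc k) (hmap u v z)"
      unfolding P_def Pmap_def using zc(2) by simp
    have e2: "b - P b = bdry V (Suc k) (c - Pmap V u v (Suc k) c)"
      unfolding P_def c(1) bdry_diff Pmap_chain_map[OF V(1)] ..
    have hz: "hmap u v z \<in> chains Kj (Suc k)" using chains_mono[OF KK hmap_chains[OF k domi uv zc(1)]] .
    have cc: "c - Pmap V u v (Suc k) c \<in> chains Kj (Suc k)"
      using chains_diff[OF c(2) Pch(1)[OF c(2) _ clj domj]] by simp
    have "x - P x = bdry V (Suc k) (hmap u v z + (c - Pmap V u v (Suc k) c))"
      unfolding bdry_add e1[symmetric] e2[symmetric] a(1) P_def Pmap_add by simp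
    moreover have "hmap u v z + (c - Pmap V u v (Suc k) c) \<in> chains Kj (Suc k)"
      using chains_add[OF hz cc] .
    ultimately have "x - P x \<in> Bj" unfolding Bjc by blast
    then show ?thesis using hP by simp
  qed
  have main: "fs.dim A - fs.dim Bj = fs.dim A' - fs.dim Bj'"
  proof (rule fs.dim_retract[OF sA sB sA' sB' AW _ BA AA BB BA', where f = P])
    show "finite (delta ` Pow V)" using V(1) by simp
    show "P (x + y) = P x + P y" for x y unfolding P_def by (rule Pmap_add)
    show "P (\<lambda>xa. c * x xa) = (\<lambda>xa. c * P x xa)" for c x unfolding P_def by (rule Pmap_scale)
    show "x \<in> A \<Longrightarrow> P x \<in> A'" for x by (rule PA)
    show "x \<in> Bj \<Longrightarrow> P x \<in> Bj'" for x by (rule PB)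
    show "x \<in> A' \<Longrightarrow> P x = x" for x unfolding P_def by (rule Pmap_fix[OF uv avA'])
    show "x \<in> A \<Longrightarrow> P x = 0 \<Longrightarrow> x \<in> Bj" for x by (rule ker)
  qed
  then show ?thesis unfolding dimF_def A_def A'_def Zi_def Zi'_def Bj_def Bj'_def .
qed




lemma pc_sub: "power_complex V E n \<subseteq> Pow V"
  by (auto simp: power_complex_def)

lemma pc_mono:
  assumes "i \<le> j" shows "power_complex V E i \<subseteq> power_complex V E j"
proof
  fix \<sigma> assume "\<sigma> \<in> power_complex V E i"
  then have a: "\<sigma> \<noteq> {}" "finite \<sigma>" "\<sigma> \<subseteq> V" "\<forall>x\<in>\<sigma>. \<forall>y\<in>\<sigma>. x \<noteq> y \<longrightarrow> gdist V E x y \<le> i"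
    by (auto simp: power_complex_def)
  have "\<forall>x\<in>\<sigma>. \<forall>y\<in>\<sigma>. x \<noteq> y \<longrightarrow> gdist V E x y \<le> j"
    using a(4) order.trans[OF _ assms] by simp
  then show "\<sigma> \<in> power_complex V E j" using a by (simp add: power_complex_def)
qed

lemma pc_closed: "closedK (power_complex V E n)"
  unfolding closedK_def
proof (intro ballI allI impI)
  fix \<sigma> \<tau> assume s: "\<sigma> \<in> power_complex V E n" and t: "\<tau> \<subseteq> \<sigma>" "\<tau> \<noteq> {}"
  have "finite \<sigma>" using s by (simp add: power_complex_def)
  then have "finite \<tau>" using finite_subset[OF t(1)] by simp
  then show "\<tau> \<in> power_complex V E n" using s t unfolding power_complex_def by blast
qed

lemma pc_dom:
  assumes g: "simple_graph V E" and d: "dominated_by V E u v"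
  shows "domK u v (power_complex V E n)"
  unfolding domK_def
proof (intro ballI impI)
  fix \<sigma> assume s: "\<sigma> \<in> power_complex V E n" and u: "u \<in> \<sigma>" and c2: "2 \<le> card \<sigma>"
  have vV: "v \<in> V" "u \<in> V" "u \<noteq> v" using d by (auto simp: dominated_by_def)
  have sp: "\<sigma> \<noteq> {}" "finite \<sigma>" "\<sigma> \<subseteq> V" and dist: "\<And>x y. x \<in> \<sigma> \<Longrightarrow> y \<in> \<sigma> \<Longrightarrow> x \<noteq> y \<Longrightarrow> gdist V E x y \<le> n"
    using s by (auto simp: power_complex_def)
  obtain z where z: "z \<in> \<sigma>" "z \<noteq> u"
  proof -
    have "\<sigma> - {u} \<noteq> {}"
    proof
      assume "\<sigma> - {u} = {}"
      then have "\<sigma> = {u}" using u by auto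
      then show False using c2 by simp
    qed
    then show ?thesis using that by blast
  qed
  have "1 \<le> gdist V E u z" using gdist_pos z(2) by metis
  then have n1: "1 \<le> n" using order.trans dist[OF u z(1)] z(2) by metis
  have dv: "gdist V E v y \<le> n" if "y \<in> \<sigma>" "y \<noteq> v" for y
  proof (cases "y = u")
    case True
    have "E v u" using dom_edge[OF g d] g by (simp add: simple_graph_def)
    then have "gdist V E v u \<le> 1" using gdist_edge[of E v u V] vV by simp
    then show ?thesis using True order.trans[OF _ n1] by simp
  next
    case False
    have "gdist V E v y \<le> gdist V E u y" by (rule gdist_dom[OF g d False])
    also have "\<dots> \<le> n" using dist[OF u that(1)] False by simp
    finally show ?thesis .
  qed
  show "insert v \<sigma> \<in> power_complex V E n"
    unfolding power_complex_def
  proof (intro CollectI conjI ballI impI)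
    show "insert v \<sigma> \<noteq> {}" "finite (insert v \<sigma>)" "insert v \<sigma> \<subseteq> V" using sp vV by auto
  next
    fix x y assume x: "x \<in> insert v \<sigma>" and y: "y \<in> insert v \<sigma>" and xy: "x \<noteq> y"
    show "gdist V E x y \<le> n"
    proof (cases "x = v")
      case True
      then show ?thesis using dv[of y] y xy by auto
    next
      case False
      note xv = False
      show ?thesis
      proof (cases "y = v")
        case True
        then have "gdist V E x y = gdist V E v x" using gdist_sym[OF g] by simp
        then show ?thesis using dv[of x] x xv by auto
      next
        case False
        then show ?thesis using dist x y xy xv by auto
      qed
    qed
  qed
qed


lemma pers_eq:
  fixes V :: "'v::linorder set"
  assumes g: "simple_graph V E" and d: "dominated_by V E u v" and k: "k \<ge> 1" and ij: "i \<le> j"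
  shows "pers_betti TYPE('f::field) V E k i j = pers_betti TYPE('f) (del_vertices V u) (del_edges E u) k i j"
proof -
  have V: "finite V" "u \<in> V" "v \<in> V" "u \<noteq> v" using g d by (auto simp: simple_graph_def dominated_by_def)
  show ?thesis
    unfolding pers_betti_def pc_del[OF g d]
    unfolding del_vertices_def
    by (rule pers_core[OF V k pc_mono[OF ij] pc_sub pc_closed pc_closed pc_dom[OF g d] pc_dom[OF g d]])
qed

theorem theorem3:
  fixes V :: "'v::linorder set" and E :: "'v \<Rightarrow> 'v \<Rightarrow> bool" and u v :: 'v and k :: nat
  assumes "simple_graph V E"
    and "connected_graph V E"
    and "dominated_by V E u v"
    and "k \<ge> 1"
  shows "PD TYPE('f::field) V E k = PD TYPE('f) (del_vertices V u) (del_edges E u) k"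
proof (intro ext)
  fix b :: nat and d :: enat
  note P = pers_eq[OF assms(1) assms(3) assms(4), where 'f = 'f]
  show "PD TYPE('f) V E k b d = PD TYPE('f) (del_vertices V u) (del_edges E u) k b d"
  proof (cases "d = \<infinity>")
    case True
    then show ?thesis unfolding PD_def betti_prev_def
      using P[of "enat b" \<infinity>] P[of "enat (b - 1)" \<infinity>] by simp
  next
    case False
    then obtain j where dj: "d = enat j" by (cases d) auto
    show ?thesis
    proof (cases "b < j")
      case True
      have "enat b \<le> enat (j - 1)" "enat (b - 1) \<le> enat (j - 1)" "enat b \<le> enat j" "enat (b - 1) \<le> enat j"
        using True by auto
      then show ?thesis unfolding PD_def betti_prev_def dj Let_def
        using P[of "enat b" "enat (j - 1)"] P[of "enat (b - 1)" "enat (j - 1)"]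
          P[of "enat b" "enat j"] P[of "enat (b - 1)" "enat j"] by simp
    next
      case False
      then show ?thesis unfolding PD_def dj by simp
    qed
  qed
qed


end
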